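(* Let $D>0$ and $\ell_0=\sqrt{8Dt}$. The function $$E^{(0)}(x,y,z,t)=\operatorname{erfc}\Bigl(\frac{x}{\ell_0}\Bigr)\operatorname{erfc}\Bigl(\frac{y}{\ell_0}\Bigr)+\operatorname{erfc}\Bigl(\frac{z}{\ell_0}\Bigr)\operatorname{erfc}\Bigl(\frac{x+y+z}{\ell_0}\Bigr)-\operatorname{erfc}\Bigl(\frac{x+z}{\ell_0}\Bigr)\operatorname{erfc}\Bigl(\frac{y+z}{\ell_0}\Bigr)$$ satisfies, for $t>0$, $$\partial_tE=2D\bigl[\partial_x^2+\partial_y^2+\partial_z^2-\partial_x\partial_z-\partial_y\partial_z\bigr]E,$$ together with the consistency conditions $E^{(0)}(x,y,z,t)=E^{(0)}(y,x,z,t)$, $E^{(0)}(x,0,z,t)=\operatorname{erfc}(x/\ell_0)$, $E^{(0)}(0,y,z,t)=\operatorname{erfc}(y/\ell_0)$, $E^{(0)}(x,y,0,t)=\operatorname{erfc}((x+y)/\ell_0)$, and $E^{(0)}(x,y,z,t)\to0$ as $t\to0^+$ for $x,y,z>0$. It is the two-interval probability for an initially fully occupied lattice, and $E^{(0)}(x,y,z,t)\to\operatorname{erfc}(x/\ell_0)\operatorname{erfc}(y/\ell_0)$ as $z\to\infty$.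
   Context: In the continuum limit of the one-dimensional coagulation-diffusion process with diffusion constant $D$, $E(x,y,z,t)$ denotes the probability of two empty intervals of lengths at least $x$ and $y$ separated by distance $z$ at time $t$; for the initially full lattice the single-interval probability is $E(x,t)=\operatorname{erfc}(x/\ell_0)$. *)

theory Defs
  imports "HOL-Analysis.Analysis"
begin

definition erfc :: "real \<Rightarrow> real" where
  "erfc x = 2 / sqrt pi * integral {x..} (\<lambda>s. exp (- (s\<^sup>2)))"

definition ell0 :: "real \<Rightarrow> real \<Rightarrow> real" where
  "ell0 D t = sqrt (8 * D * t)"

definition E0 :: "real \<Rightarrow> real \<Rightarrow> real \<Rightarrow> real \<Rightarrow> real \<Rightarrow> real" where
  "E0 D x y z t =
     erfc (x / ell0 D t) * erfc (y / ell0 D t)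
   + erfc (z / ell0 D t) * erfc ((x + y + z) / ell0 D t)
   - erfc ((x + z) / ell0 D t) * erfc ((y + z) / ell0 D t)"

end

theory Submission imports Defs "HOL-Probability.Probability" begin

lemma g_int: "integrable lborel (\<lambda>x::real. exp (- x\<^sup>2))"
proof -
  have "has_bochner_integral lborel (\<lambda>x::real. exp (- x\<^sup>2)) (2 * (sqrt pi / 2))"
    using has_bochner_integral_even_function[OF gaussian_moment_0] by simp
  then show ?thesis unfolding integrable.simps by blast
qed

lemma g_setint: "set_integrable lborel {a..} (\<lambda>x::real. exp (- x\<^sup>2))"
  unfolding set_integrable_def by (rule integrable_mult_indicator[OF _ g_int]) auto

lemma g_integral: "integral {a..} (\<lambda>x::real. exp (- x\<^sup>2)) = (\<integral>x. indicator {a..} x *\<^sub>R exp (- x\<^sup>2) \<partial>lborel)"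
  using set_borel_integral_eq_integral(2)[OF g_setint[of a]] by (simp add: set_lebesgue_integral_def)

lemma g_hasint: "((\<lambda>x::real. exp (- x\<^sup>2)) has_integral integral {a..} (\<lambda>x::real. exp (- x\<^sup>2))) {a..}"
  using set_borel_integral_eq_integral(1)[OF g_setint[of a]] by (simp add: integrable_integral)

lemma erfc_0: "erfc 0 = 1"
proof -
  have "(\<integral>x. indicator {0..} x *\<^sub>R exp (- x\<^sup>2) \<partial>lborel) = sqrt pi / 2"
    using gaussian_moment_0 by (simp add: has_bochner_integral_integral_eq)
  then show ?thesis unfolding erfc_def g_integral by simp
qed

lemma erfc_at_top: "(erfc \<longlongrightarrow> 0) at_top"
proof -
  have "((\<lambda>t. \<integral>x. indicator {t..} x *\<^sub>R exp (- x\<^sup>2) \<partial>lborel) \<longlongrightarrow> (\<integral>x. (0::real) \<partial>(lborel::real measure))) at_top"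
  proof (rule integral_dominated_convergence_at_top[where w="\<lambda>x::real. exp (- x\<^sup>2)" and f="\<lambda>x::real. 0::real" and s="\<lambda>t x. indicator {t..} x *\<^sub>R exp (- x\<^sup>2)" and M=lborel])
    show "integrable lborel (\<lambda>x::real. exp (- x\<^sup>2))" by (rule g_int)
    show "AE x in lborel. ((\<lambda>t. indicator {t..} x *\<^sub>R exp (- x\<^sup>2)) \<longlongrightarrow> (0::real)) at_top"
    proof (rule AE_I2)
      fix x :: real
      have "eventually (\<lambda>t. indicator {t..} x *\<^sub>R exp (- x\<^sup>2) = (0::real)) at_top"
        using eventually_gt_at_top[of x] by eventually_elim (auto simp: indicator_def)
      then show "((\<lambda>t. indicator {t..} x *\<^sub>R exp (- x\<^sup>2)) \<longlongrightarrow> (0::real)) at_top"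
        by (rule tendsto_eventually)
    qed
    show "\<forall>\<^sub>F i in at_top. AE x in lborel. norm (indicator {i..} x *\<^sub>R exp (- x\<^sup>2)) \<le> exp (- x\<^sup>2)"
      by (auto simp: indicator_def)
  qed auto
  then have "((\<lambda>t. 2 / sqrt pi * integral {t..} (\<lambda>x::real. exp (- x\<^sup>2))) \<longlongrightarrow> 2 / sqrt pi * 0) at_top"
    unfolding g_integral by (intro tendsto_mult tendsto_const) simp
  then show ?thesis by (simp add: erfc_def[abs_def])
qed

lemma erfc_deriv: "(erfc has_real_derivative (- 2 / sqrt pi * exp (- x\<^sup>2))) (at x)"
proof -
  let ?g = "\<lambda>x::real. exp (- x\<^sup>2)"
  define a where "a = x - 1"
  have cont: "continuous_on {a..x+1} ?g" by (intro continuous_intros)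
  have d1: "((\<lambda>u. integral {a..u} ?g) has_real_derivative ?g x) (at x)"
    using integral_has_real_derivative[OF cont, of x] at_within_Icc_at[of a x "x+1"]
    by (simp add: a_def)
  have d2: "((\<lambda>u. 2 / sqrt pi * (integral {a..} ?g - integral {a..u} ?g)) has_real_derivative
      (- 2 / sqrt pi * ?g x)) (at x)"
    by (rule derivative_eq_intros d1 | simp)+
  show ?thesis
  proof (rule has_field_derivative_transform_within_open[OF d2, of "{a<..}"])
    show "open {a<..}" by simp
    show "x \<in> {a<..}" by (simp add: a_def)
    fix u assume u: "u \<in> {a<..}"
    have h1: "(?g has_integral integral {a..u} ?g) {a..u}"
      by (intro integrable_integral integrable_continuous_interval continuous_intros)
    have "(?g has_integral (integral {a..u} ?g + integral {u..} ?g)) ({a..u} \<union> {u..})"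
      by (rule has_integral_Un[OF h1 g_hasint]) (auto intro: negligible_subset[OF negligible_sing[of u]])
    moreover have "{a..u} \<union> {u..} = {a..}" using u by auto
    ultimately have "integral {a..} ?g = integral {a..u} ?g + integral {u..} ?g"
      by (simp add: integral_unique)
    then show "2 / sqrt pi * (integral {a..} ?g - integral {a..u} ?g) = erfc u"
      by (simp add: erfc_def)
  qed
qed


definition Fe :: "real \<Rightarrow> real \<Rightarrow> real" where "Fe l u = erfc (u / l)"
definition Fe1 :: "real \<Rightarrow> real \<Rightarrow> real" where "Fe1 l u = - (2 / sqrt pi) * exp (- (u / l)\<^sup>2) / l"
definition Fe2 :: "real \<Rightarrow> real \<Rightarrow> real" where "Fe2 l u = 2 * (2 / sqrt pi) * u * exp (- (u / l)\<^sup>2) / l ^ 3"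

lemma Fe_chain [derivative_intros]:
  assumes "l \<noteq> 0" "(g has_real_derivative g') (at u within S)" "D' = Fe1 l (g u) * g'"
  shows "((\<lambda>u. Fe l (g u)) has_real_derivative D') (at u within S)"
proof -
  have "((\<lambda>u. g u / l) has_real_derivative g' / l) (at u within S)"
    using assms(1) by (auto intro!: derivative_eq_intros assms(2))
  from DERIV_chain2[OF erfc_deriv this] show ?thesis
    unfolding Fe_def assms(3) Fe1_def by (simp add: field_simps)
qed

lemma Fe1_chain [derivative_intros]:
  assumes "l \<noteq> 0" "(g has_real_derivative g') (at u within S)" "D' = Fe2 l (g u) * g'"
  shows "((\<lambda>u. Fe1 l (g u)) has_real_derivative D') (at u within S)"
  unfolding Fe1_def assms(3) Fe2_def
  using assms(1) by (auto intro!: derivative_eq_intros assms(2) simp: field_simps power2_eq_square power3_eq_cube)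

lemma Fe_t:
  assumes "D > 0" "t > 0"
  shows "((\<lambda>s. Fe (ell0 D s) u) has_real_derivative 2 * D * Fe2 (ell0 D t) u) (at t)"
proof -
  have pos: "8 * D * t > 0" using assms by simp
  define q where "q = sqrt (8 * D * t)"
  have q: "q > 0" "q\<^sup>2 = 8 * D * t" using pos by (auto simp: q_def)
  have "((\<lambda>s. u / sqrt (8 * D * s)) has_real_derivative - u * (4 * D / q) / q\<^sup>2) (at t)"
    using pos q by (auto intro!: derivative_eq_intros simp: q_def field_simps power2_eq_square)
  from DERIV_chain2[OF erfc_deriv this]
  have "((\<lambda>s. erfc (u / sqrt (8 * D * s))) has_real_derivative
     - 2 / sqrt pi * exp (- (u / q)\<^sup>2) * (- u * (4 * D / q) / q\<^sup>2)) (at t)"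
    by (simp add: q_def)
  moreover have "- 2 / sqrt pi * exp (- (u / q)\<^sup>2) * (- u * (4 * D / q) / q\<^sup>2)
      = 2 * D * (2 * (2 / sqrt pi) * u * exp (- (u / q)\<^sup>2) / q ^ 3)"
    using q by (simp add: field_simps power2_eq_square power3_eq_cube)
  ultimately show ?thesis
    unfolding Fe_def Fe2_def ell0_def q_def[symmetric] by simp
qed

lemma lim_div_at_top: "l > 0 \<Longrightarrow> filterlim (\<lambda>z::real. (a + z) / l) at_top at_top"
proof -
  assume l: "l > 0"
  have "filterlim (\<lambda>z::real. a + z) at_top at_top"
    by (rule filterlim_tendsto_add_at_top[OF tendsto_const filterlim_ident])
  from filterlim_tendsto_pos_mult_at_top[OF tendsto_const[of "1/l"] _ this] l
  show ?thesis by (simp add: field_simps)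
qed

theorem mainTheorem7:
  fixes D :: real
  assumes "D > 0"
  shows
    "(\<forall>x y z t. t > 0 \<longrightarrow>
        deriv (\<lambda>s. E0 D x y z s) t =
        2 * D * ( deriv (\<lambda>a. deriv (\<lambda>b. E0 D b y z t) a) x
                + deriv (\<lambda>a. deriv (\<lambda>b. E0 D x b z t) a) y
                + deriv (\<lambda>a. deriv (\<lambda>b. E0 D x y b t) a) z
                - deriv (\<lambda>c. deriv (\<lambda>b. E0 D b y c t) x) z
                - deriv (\<lambda>c. deriv (\<lambda>b. E0 D x b c t) y) z))
   \<and> (\<forall>x y z t. t > 0 \<longrightarrow> E0 D x y z t = E0 D y x z t)
   \<and> (\<forall>x z t. t > 0 \<longrightarrow> E0 D x 0 z t = erfc (x / ell0 D t))
   \<and> (\<forall>y z t. t > 0 \<longrightarrow> E0 D 0 y z t = erfc (y / ell0 D t))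
   \<and> (\<forall>x y t. t > 0 \<longrightarrow> E0 D x y 0 t = erfc ((x + y) / ell0 D t))
   \<and> (\<forall>x y z. x > 0 \<and> y > 0 \<and> z > 0 \<longrightarrow>
        ((\<lambda>t. E0 D x y z t) \<longlongrightarrow> 0) (at_right 0))
   \<and> (\<forall>x y t. t > 0 \<longrightarrow>
        ((\<lambda>z. E0 D x y z t) \<longlongrightarrow> erfc (x / ell0 D t) * erfc (y / ell0 D t)) at_top)"
proof (intro conjI allI impI)
  have E0_eq: "\<And>x y z t. E0 D x y z t = Fe (ell0 D t) x * Fe (ell0 D t) y + Fe (ell0 D t) z * Fe (ell0 D t) (x+y+z) - Fe (ell0 D t) (x+z) * Fe (ell0 D t) (y+z)"
    by (simp add: E0_def Fe_def)
  {
    fix x y z t :: real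
    assume t: "t > 0"
    define l where "l = ell0 D t"
    have l: "l \<noteq> 0" using t assms by (simp add: l_def ell0_def)
    have E0_l: "\<And>x y z. E0 D x y z t = Fe l x * Fe l y + Fe l z * Fe l (x+y+z) - Fe l (x+z) * Fe l (y+z)"
      using E0_eq l_def by simp
    have dx1: "\<And>a y z. deriv (\<lambda>b. E0 D b y z t) a = Fe1 l a * Fe l y + Fe l z * Fe1 l (a+y+z) - Fe1 l (a+z) * Fe l (y+z)"
      unfolding E0_l by (rule DERIV_imp_deriv) (use l in \<open>auto intro!: derivative_eq_intros simp: algebra_simps\<close>)
    have dx2: "deriv (\<lambda>a. deriv (\<lambda>b. E0 D b y z t) a) x = Fe2 l x * Fe l y + Fe l z * Fe2 l (x+y+z) - Fe2 l (x+z) * Fe l (y+z)"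
      unfolding dx1 by (rule DERIV_imp_deriv) (use l in \<open>auto intro!: derivative_eq_intros simp: algebra_simps\<close>)
    have dy1: "\<And>a x z. deriv (\<lambda>b. E0 D x b z t) a = Fe l x * Fe1 l a + Fe l z * Fe1 l (x+a+z) - Fe l (x+z) * Fe1 l (a+z)"
      unfolding E0_l by (rule DERIV_imp_deriv) (use l in \<open>auto intro!: derivative_eq_intros simp: algebra_simps\<close>)
    have dy2: "deriv (\<lambda>a. deriv (\<lambda>b. E0 D x b z t) a) y = Fe l x * Fe2 l y + Fe l z * Fe2 l (x+y+z) - Fe l (x+z) * Fe2 l (y+z)"
      unfolding dy1 by (rule DERIV_imp_deriv) (use l in \<open>auto intro!: derivative_eq_intros simp: algebra_simps\<close>)
    have dz1: "\<And>a. deriv (\<lambda>b. E0 D x y b t) a = Fe1 l a * Fe l (x+y+a) + Fe l a * Fe1 l (x+y+a) - Fe1 l (x+a) * Fe l (y+a) - Fe l (x+a) * Fe1 l (y+a)"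
      unfolding E0_l by (rule DERIV_imp_deriv) (use l in \<open>auto intro!: derivative_eq_intros simp: algebra_simps\<close>)
    have dz2: "deriv (\<lambda>a. deriv (\<lambda>b. E0 D x y b t) a) z = Fe2 l z * Fe l (x+y+z) + 2 * Fe1 l z * Fe1 l (x+y+z) + Fe l z * Fe2 l (x+y+z)
        - Fe2 l (x+z) * Fe l (y+z) - 2 * Fe1 l (x+z) * Fe1 l (y+z) - Fe l (x+z) * Fe2 l (y+z)"
      unfolding dz1 by (rule DERIV_imp_deriv) (use l in \<open>auto intro!: derivative_eq_intros simp: algebra_simps\<close>)
    have dxz: "deriv (\<lambda>c. deriv (\<lambda>b. E0 D b y c t) x) z = Fe1 l z * Fe1 l (x+y+z) + Fe l z * Fe2 l (x+y+z) - Fe2 l (x+z) * Fe l (y+z) - Fe1 l (x+z) * Fe1 l (y+z)"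
      unfolding dx1 by (rule DERIV_imp_deriv) (use l in \<open>auto intro!: derivative_eq_intros simp: algebra_simps\<close>)
    have dyz: "deriv (\<lambda>c. deriv (\<lambda>b. E0 D x b c t) y) z = Fe1 l z * Fe1 l (x+y+z) + Fe l z * Fe2 l (x+y+z) - Fe1 l (x+z) * Fe1 l (y+z) - Fe l (x+z) * Fe2 l (y+z)"
      unfolding dy1 by (rule DERIV_imp_deriv) (use l in \<open>auto intro!: derivative_eq_intros simp: algebra_simps\<close>)
    have dt: "deriv (\<lambda>s. E0 D x y z s) t = 2 * D * (Fe2 l x * Fe l y + Fe l x * Fe2 l y + Fe2 l z * Fe l (x+y+z) + Fe l z * Fe2 l (x+y+z)
        - Fe2 l (x+z) * Fe l (y+z) - Fe l (x+z) * Fe2 l (y+z))"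
      unfolding E0_eq l_def by (rule DERIV_imp_deriv) (use assms t in \<open>auto intro!: derivative_eq_intros Fe_t simp: algebra_simps\<close>)
    show "deriv (\<lambda>s. E0 D x y z s) t =
        2 * D * ( deriv (\<lambda>a. deriv (\<lambda>b. E0 D b y z t) a) x
                + deriv (\<lambda>a. deriv (\<lambda>b. E0 D x b z t) a) y
                + deriv (\<lambda>a. deriv (\<lambda>b. E0 D x y b t) a) z
                - deriv (\<lambda>c. deriv (\<lambda>b. E0 D b y c t) x) z
                - deriv (\<lambda>c. deriv (\<lambda>b. E0 D x b c t) y) z)"
      unfolding dt dx2 dy2 dz2 dxz dyz by (simp add: algebra_simps)
  }
next
  fix x y z t :: real
  show "E0 D x y z t = E0 D y x z t" by (simp add: E0_def algebra_simps)
next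
  fix x z t :: real
  show "E0 D x 0 z t = erfc (x / ell0 D t)" by (simp add: E0_def erfc_0 algebra_simps)
next
  fix y z t :: real
  show "E0 D 0 y z t = erfc (y / ell0 D t)" by (simp add: E0_def erfc_0 algebra_simps)
next
  fix x y t :: real
  show "E0 D x y 0 t = erfc ((x + y) / ell0 D t)" by (simp add: E0_def erfc_0 algebra_simps)
next
  fix x y z :: real
  assume xyz: "x > 0 \<and> y > 0 \<and> z > 0"
  have ell: "(ell0 D \<longlongrightarrow> 0) (at_right 0)"
  proof -
    have "((\<lambda>t. sqrt (8 * D * t)) \<longlongrightarrow> sqrt (8 * D * 0)) (at_right 0)"
      by (intro tendsto_intros)
    then show ?thesis by (simp add: ell0_def[abs_def])
  qed
  have ellpos: "eventually (\<lambda>t. 0 < ell0 D t) (at_right 0)"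
    using eventually_at_right_less[of "0::real"] by eventually_elim (use assms in \<open>simp add: ell0_def\<close>)
  have e0: "((\<lambda>t. erfc (u / ell0 D t)) \<longlongrightarrow> 0) (at_right 0)" if "u > 0" for u
  proof -
    have "filterlim (\<lambda>t. u / ell0 D t) at_top (at_right 0)"
      by (rule LIM_at_top_divide[OF tendsto_const that ell ellpos])
    from filterlim_compose[OF erfc_at_top this] show ?thesis .
  qed
  have "((\<lambda>t. erfc (x / ell0 D t) * erfc (y / ell0 D t) + erfc (z / ell0 D t) * erfc ((x + y + z) / ell0 D t)
      - erfc ((x + z) / ell0 D t) * erfc ((y + z) / ell0 D t)) \<longlongrightarrow> 0 * 0 + 0 * 0 - 0 * 0) (at_right 0)"
    using xyz by (intro tendsto_intros e0) auto
  then show "((\<lambda>t. E0 D x y z t) \<longlongrightarrow> 0) (at_right 0)" by (simp add: E0_def[abs_def])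
next
  fix x y t :: real
  assume t: "t > 0"
  have l: "ell0 D t > 0" using t assms by (simp add: ell0_def)
  have e0: "((\<lambda>z. erfc ((a + z) / ell0 D t)) \<longlongrightarrow> 0) at_top" for a
    using filterlim_compose[OF erfc_at_top lim_div_at_top[OF l]] .
  have "((\<lambda>z. erfc (x / ell0 D t) * erfc (y / ell0 D t) + erfc ((0 + z) / ell0 D t) * erfc ((x + y + z) / ell0 D t)
      - erfc ((x + z) / ell0 D t) * erfc ((y + z) / ell0 D t)) \<longlongrightarrow> erfc (x / ell0 D t) * erfc (y / ell0 D t) + 0 * 0 - 0 * 0) at_top"
    by (intro tendsto_intros e0)
  then show "((\<lambda>z. E0 D x y z t) \<longlongrightarrow> erfc (x / ell0 D t) * erfc (y / ell0 D t)) at_top"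
    by (simp add: E0_def[abs_def])
qed

end
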